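(* Suppose $\{0,1\}\subseteq\Sigma$ and let $\pi=x_1^4x_2^8x_3^9$. Then $\mathrm{TD}(\pi,\mathrm{NC}\Pi^{|\Sigma|}_{\infty,9})\le4$; specifically, the set $\{(v_1,+),(v_2,-),(v_3,-),(v_4,-)\}$ with $v_1=(01)^4(001)^8(0001)^9$, $v_2=(01)^{9!}(001)^{9!}(0001)^{9!}(00001)^{9!}$, $v_3=0^8(10^6)^80^3$, $v_4=(01)^4(001)^4(0001)^9$ is a teaching set for $\pi$ w.r.t. $\mathrm{NC}\Pi^{|\Sigma|}_{\infty,9}$.
   Context: Fix a countably infinite set $X$ of variables and an alphabet $\Sigma$ disjoint from $X$. A pattern is a nonempty finite string over $X\cup\Sigma$. A substitution is a morphism $h:(X\cup\Sigma)^*\to\Sigma^*$ fixing letters; $L(\pi)$ (erasing pattern language) is the set of all $h(\pi)$. A non-cross pattern is a constant-free pattern $x_0^{n_0}\cdots x_k^{n_k}$ with distinct variables and $n_i\ge1$; $\mathrm{NC}\Pi^z_{\infty,m}$ is the class of non-cross patterns over an alphabet of size $z$ in which every variable occurs at most $m$ times. A labelled example is $(w,\pm)$ with $w\in\Sigma^*$; a teaching set for $\pi$ w.r.t. a class $\Pi$ is a set $T$ of labelled examples consistent with $\pi$ ($w\in L(\pi)$ iff label $+$) such that every $\tau\in\Pi$ consistent with $T$ has $L(\tau)=L(\pi)$; $\mathrm{TD}(\pi,\Pi)$ is its minimum size. *)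

theory Defs
  imports Main "HOL-Library.Extended_Nat"
begin

datatype 'a sym = Var nat | Const 'a

type_synonym 'a pattern = "'a sym list"

definition is_pattern :: "'a pattern \<Rightarrow> bool" where
  "is_pattern p \<longleftrightarrow> p \<noteq> []"

definition subst :: "(nat \<Rightarrow> 'a list) \<Rightarrow> 'a pattern \<Rightarrow> 'a list" where
  "subst h p = concat (map (\<lambda>s. case s of Var x \<Rightarrow> h x | Const c \<Rightarrow> [c]) p)"

text \<open>Erasing pattern language.\<close>
definition lang :: "'a pattern \<Rightarrow> 'a list set" where
  "lang p = {subst h p | h. True}"

definition wpow :: "'a list \<Rightarrow> nat \<Rightarrow> 'a list" where
  "wpow w n = concat (replicate n w)"

definition non_cross :: "'a pattern \<Rightarrow> bool" where
  "non_cross p \<longleftrightarrow> (\<exists>xs ns. xs \<noteq> [] \<and> length xs = length ns \<and> distinct xs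
      \<and> (\<forall>n\<in>set ns. n \<ge> 1)
      \<and> p = concat (map (\<lambda>(x, n). replicate n (Var x)) (zip xs ns)))"

definition NC_class :: "nat \<Rightarrow> 'a pattern set" where
  "NC_class m = {p. non_cross p \<and> (\<forall>x. count_list p (Var x) \<le> m)}"

text \<open>Labelled examples (w, True) = (w,+), (w, False) = (w,-).\<close>
definition consistent :: "'a pattern \<Rightarrow> ('a list \<times> bool) set \<Rightarrow> bool" where
  "consistent p T \<longleftrightarrow> (\<forall>(w, b)\<in>T. (w \<in> lang p \<longleftrightarrow> b))"

definition teaching_set :: "'a pattern \<Rightarrow> 'a pattern set \<Rightarrow> ('a list \<times> bool) set \<Rightarrow> bool" where
  "teaching_set p C T \<longleftrightarrow> finite T \<and> consistent p T \<and>
     (\<forall>\<tau>\<in>C. consistent \<tau> T \<longrightarrow> lang \<tau> = lang p)"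

text \<open>Teaching dimension (infinity if no finite teaching set exists).\<close>
definition TD :: "'a pattern \<Rightarrow> 'a pattern set \<Rightarrow> enat" where
  "TD p C = (INF T \<in> {T. teaching_set p C T}. enat (card T))"

end

theory Submission
  imports Defs
begin


lemma wpow_0[simp]: "wpow w 0 = []" by (simp add: wpow_def)
lemma wpow_Suc: "wpow w (Suc n) = w @ wpow w n" by (simp add: wpow_def)
lemma length_wpow[simp]: "length (wpow w n) = n * length w"
  by (induction n) (auto simp: wpow_Suc)
lemma map_wpow: "map f (wpow w n) = wpow (map f w) n"
  by (simp add: wpow_def map_concat)
lemma wpow_Nil[simp]: "wpow [] n = []" by (simp add: wpow_def)
lemma wpow_add: "wpow w (a + b) = wpow w a @ wpow w b"
  by (simp add: wpow_def replicate_add)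
lemma wpow_mult: "wpow (wpow w a) b = wpow w (a * b)"
  by (induction b) (auto simp: wpow_Suc wpow_add)
lemma wpow_1[simp]: "wpow w 1 = w" by (simp add: wpow_def)

lemma nth_wpow: "k < n * length w \<Longrightarrow> wpow w n ! k = w ! (k mod length w)"
proof (induction n arbitrary: k)
  case 0 then show ?case by simp
next
  case (Suc n)
  show ?case
  proof (cases "k < length w")
    case True then show ?thesis by (simp add: wpow_Suc nth_append)
  next
    case False
    then have "k - length w < n * length w" using Suc.prems by simp
    then have "wpow w n ! (k - length w) = w ! ((k - length w) mod length w)" using Suc.IH by blast
    moreover have "(k - length w) mod length w = k mod length w"
      using False by (simp add: le_mod_geq)
    ultimately show ?thesis using False by (simp add: wpow_Suc nth_append)
  qed
qed

definition blk :: "nat \<Rightarrow> bool list" where "blk g = replicate g False @ [True]"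
lemma length_blk: "length (blk g) = Suc g" by (simp add: blk_def)
lemma blk_wpow_nth: "k < m * Suc g \<Longrightarrow> wpow (blk g) m ! k = (k mod Suc g = g)"
proof -
  assume "k < m * Suc g"
  then have "wpow (blk g) m ! k = blk g ! (k mod Suc g)" using nth_wpow[of k m "blk g"] by (simp add: length_blk)
  moreover have "k mod Suc g < Suc g" by simp
  ultimately show ?thesis by (auto simp: blk_def nth_append less_Suc_eq)
qed

definition cpair :: "bool list \<Rightarrow> nat \<Rightarrow> nat \<Rightarrow> bool" where
  "cpair w a b \<longleftrightarrow> a < b \<and> b < length w \<and> w ! a \<and> w ! b \<and> (\<forall>t. a < t \<and> t < b \<longrightarrow> \<not> w ! t)"

definition gapmono :: "bool list \<Rightarrow> bool" where
  "gapmono w \<longleftrightarrow> (\<forall>a b a' b'. cpair w a b \<and> cpair w a' b' \<and> a \<le> a' \<longrightarrow> b - a \<le> b' - a')"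

lemma cpair_le: "cpair w a b \<Longrightarrow> cpair w a' b' \<Longrightarrow> a \<le> a' \<Longrightarrow> b \<le> b'"
  unfolding cpair_def by (metis le_eq_less_or_eq linorder_neqE_nat order.strict_trans)

lemma gapmono_F:
  assumes nth: "\<And>k. k < length w \<Longrightarrow> w ! k = F k"
    and h1: "\<And>a b. F a \<Longrightarrow> F b \<Longrightarrow> a < b \<Longrightarrow> b < length w \<Longrightarrow> z b \<le> b \<and> F (b - z b)"
    and h2: "\<And>b t. F b \<Longrightarrow> b < length w \<Longrightarrow> b - z b < t \<Longrightarrow> t < b \<Longrightarrow> \<not> F t"
    and mz: "\<And>x y. x \<le> y \<Longrightarrow> z x \<le> z y"
    and zpos: "\<And>b. 0 < z b"
  shows "gapmono w"
proof -
  have key: "b - a = z b" if c: "cpair w a b" for a b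
  proof -
    from c have ab: "a < b" "b < length w" "F a" "F b" and zr: "\<And>t. a < t \<Longrightarrow> t < b \<Longrightarrow> \<not> F t"
      unfolding cpair_def using nth by auto
    from h1[OF ab(3) ab(4) ab(1) ab(2)] have z1: "z b \<le> b" "F (b - z b)" by auto
    have "\<not> a < b - z b"
    proof
      assume "a < b - z b"
      moreover have "b - z b < b" using ab z1 zpos[of b] by linarith
      ultimately show False using zr z1(2) by blast
    qed
    moreover have "\<not> b - z b < a" using h2[OF ab(4) ab(2)] ab(1) ab(3) by blast
    ultimately show ?thesis using z1 by linarith
  qed
  show ?thesis unfolding gapmono_def
  proof (intro allI impI)
    fix a b a' b' assume "cpair w a b \<and> cpair w a' b' \<and> a \<le> a'"
    then have "b \<le> b'" "b - a = z b" "b' - a' = z b'" using cpair_le key by blast+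
    then show "b - a \<le> b' - a'" using mz by simp
  qed
qed

lemma part_lemma:
  assumes gm: "gapmono w" and w: "w = P @ wpow u n @ Q" and n: "2 \<le> n"
    and si: "length P \<le> i" and cij: "cpair w i j" and cjk: "cpair w j k"
    and ke: "k < length P + n * length u"
  shows "j - i = k - j"
proof -
  define s where "s = length P"
  define p where "p = length u"
  define e where "e = s + n * p"
  have per: "w ! t = w ! (t + p)" if "s \<le> t" "t + p < e" for t
  proof -
    have p0: "0 < p" using that e_def by (cases p) auto
    have l1: "t - s < n * p" "t + p - s < n * p" using that e_def by auto
    have a: "w ! t = wpow u n ! (t - s)" using that w s_def p_def l1
      by (simp add: nth_append)
    have b: "w ! (t + p) = wpow u n ! (t + p - s)" using that w s_def p_def l1
      by (simp add: nth_append)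
    have "wpow u n ! (t - s) = u ! ((t - s) mod p)" using that e_def p_def nth_wpow by (simp add: nth_wpow)
    moreover have "wpow u n ! (t + p - s) = u ! ((t + p - s) mod p)" using that e_def p_def by (simp add: nth_wpow)
    moreover have "(t + p - s) mod p = (t - s) mod p"
      using that by (metis Nat.add_diff_assoc2 mod_add_self2)
    ultimately show ?thesis using a b by simp
  qed
  from cij have ij: "i < j" "w ! i" "w ! j" "\<And>t. i < t \<Longrightarrow> t < j \<Longrightarrow> \<not> w ! t" "j < length w"
    unfolding cpair_def by auto
  from cjk have jk: "j < k" "w ! k" "\<And>t. j < t \<Longrightarrow> t < k \<Longrightarrow> \<not> w ! t" "k < length w"
    unfolding cpair_def by auto
  have si': "s \<le> i" and ke': "k < e" using si ke s_def e_def p_def by auto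
  have len: "e \<le> length w" using w e_def s_def p_def by simp
  have pp: "0 < p" using si' ke' ij jk e_def by (cases p) auto
  have pj: "j - i \<le> p"
  proof (rule ccontr)
    assume "\<not> j - i \<le> p"
    then have "s \<le> j - p" "j - p + p < e" "i < j - p" "j - p < j" using si' ij jk ke' pp by auto
    then show False using per[of "j - p"] ij by auto
  qed
  have pk: "k - j \<le> p"
  proof (rule ccontr)
    assume "\<not> k - j \<le> p"
    then have "s \<le> j" "j + p < e" "j < j + p" "j + p < k" using si' ij jk ke' pp by auto
    then show False using per[of j] ij jk by auto
  qed
  have le1: "j - i \<le> k - j" using gm cij cjk ij unfolding gapmono_def by auto
  have le2: "k - j \<le> j - i"
  proof (cases "j + p < e")
    case True
    have c: "cpair w (i + p) (j + p)" unfolding cpair_def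
    proof (intro conjI allI impI)
      show "i + p < j + p" using ij by simp
      show "j + p < length w" using True len by simp
      show "w ! (i + p)" using per[of i] si' True ij by simp
      show "w ! (j + p)" using per[of j] si' True ij by simp
      fix t assume H: "i + p < t \<and> t < j + p"
      then have hh: "s \<le> t - p" "t - p + p < e" "i < t - p" "t - p < j" "t - p + p = t" using si' True by auto
      then have "w ! (t - p) = w ! t" using per[of "t - p"] by simp
      then show "\<not> w ! t" using ij(4)[of "t - p"] hh by auto
    qed
    have "j \<le> i + p" using pj ij by simp
    then have "k - j \<le> (j + p) - (i + p)" using gm c cjk unfolding gapmono_def by blast
    then show ?thesis by simp
  next
    case False
    have np: "2 * p \<le> n * p" using n by simp
    have sp: "s + p \<le> j" using False e_def np by linarith
    have c: "cpair w (j - p) (k - p)" unfolding cpair_def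
    proof (intro conjI allI impI)
      show "j - p < k - p" using ij jk pk sp by simp
      show "k - p < length w" using jk by simp
      have e1: "j - p + p = j" "k - p + p = k" using sp pk ij jk by auto
      have "w ! (j - p) = w ! j" using per[of "j - p"] sp ij e1 ke' jk by simp
      then show "w ! (j - p)" using ij by simp
      have "w ! (k - p) = w ! k" using per[of "k - p"] sp jk ke' e1 ij by simp
      then show "w ! (k - p)" using jk by simp
      fix t assume H: "j - p < t \<and> t < k - p"
      then have "s \<le> t" "t + p < e" using sp ke' pk jk by auto
      then have "w ! t = w ! (t + p)" using per[of t] by blast
      moreover have "j < t + p" "t + p < k" using H sp ij jk by linarith+
      moreover have "\<not> w ! (t + p)" using jk(3)[of "t + p"] calculation(2,3) by blast
      ultimately show "\<not> w ! t" by simp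
    qed
    have "j - p \<le> i" using pj ij by simp
    then have "(k - p) - (j - p) \<le> j - i" using gm c cij unfolding gapmono_def by blast
    then show ?thesis using pk ij jk sp by simp
  qed
  show ?thesis using le1 le2 by simp
qed


lemma straddle:
  assumes gm: "gapmono w" and w: "w = wpow u1 n1 @ wpow u2 n2 @ wpow u3 n3"
    and n: "2 \<le> n1" "2 \<le> n2" "2 \<le> n3"
    and cij: "cpair w i j" and cjk: "cpair w j k" and d: "j - i \<noteq> k - j"
  shows "(i < n1 * length u1 \<and> n1 * length u1 \<le> k) \<or>
         (i < n1 * length u1 + n2 * length u2 \<and> n1 * length u1 + n2 * length u2 \<le> k)"
proof (rule ccontr)
  assume H: "\<not> ?thesis"
  have kl: "k < length w" using cjk unfolding cpair_def by auto
  have ik: "i < k" using cij cjk unfolding cpair_def by auto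
  consider (a) "k < n1 * length u1" | (b) "n1 * length u1 \<le> i" "k < n1 * length u1 + n2 * length u2"
    | (c) "n1 * length u1 + n2 * length u2 \<le> i" using H ik by linarith
  then show False
  proof cases
    case a
    have "j - i = k - j"
      by (rule part_lemma[OF gm _ n(1), where P = "[]" and Q = "wpow u2 n2 @ wpow u3 n3"])
         (use w cij cjk a in auto)
    then show False using d by simp
  next
    case b
    have "j - i = k - j"
      by (rule part_lemma[OF gm _ n(2), where P = "wpow u1 n1" and Q = "wpow u3 n3"])
         (use w cij cjk b in auto)
    then show False using d by simp
  next
    case c
    have "j - i = k - j"
      by (rule part_lemma[OF gm _ n(3), where P = "wpow u1 n1 @ wpow u2 n2" and Q = "[]"])
         (use w cij cjk c kl in auto)
    then show False using d by simp
  qed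
qed


lemma b1: "k < 2 * m \<Longrightarrow> wpow (blk 1) m ! k = (k mod 2 = 1)"
proof -
  assume "k < 2*m" then have "k < m * Suc 1" by simp
  from blk_wpow_nth[OF this] show ?thesis by (simp add: numeral_2_eq_2)
qed
lemma b2: "k < 3 * m \<Longrightarrow> wpow (blk 2) m ! k = (k mod 3 = 2)"
proof -
  assume "k < 3*m" then have "k < m * Suc 2" by simp
  from blk_wpow_nth[OF this] show ?thesis by (simp)
qed
lemma b3: "k < 4 * m \<Longrightarrow> wpow (blk 3) m ! k = (k mod 4 = 3)"
proof -
  assume "k < 4*m" then have "k < m * Suc 3" by simp
  from blk_wpow_nth[OF this] show ?thesis by (simp)
qed
lemma b4: "k < 5 * m \<Longrightarrow> wpow (blk 4) m ! k = (k mod 5 = 4)"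
proof -
  assume "k < 5*m" then have "k < m * Suc 4" by simp
  from blk_wpow_nth[OF this] show ?thesis by (simp)
qed
lemma lw: "length (wpow (blk 1) m) = 2 * m" "length (wpow (blk 2) m) = 3 * m"
   "length (wpow (blk 3) m) = 4 * m" "length (wpow (blk 4) m) = 5 * m"
  by (simp_all add: length_blk)
definition bv2 :: "nat \<Rightarrow> bool list" where
  "bv2 N = wpow (blk 1) N @ wpow (blk 2) N @ wpow (blk 3) N @ wpow (blk 4) N"
definition F2 :: "nat \<Rightarrow> nat \<Rightarrow> bool" where
 "F2 N k = (if k < 2*N then k mod 2 = 1 else if k < 5*N then (k-2*N) mod 3 = 2 else if k < 9*N then (k - 5*N) mod 4 = 3 else (k-9*N) mod 5 = 4)"
lemma length_bv2: "length (bv2 N) = 14 * N" by (simp only: bv2_def length_append lw)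
lemma bv2_nth: assumes "k < length (bv2 N)" shows "bv2 N ! k = F2 N k"
proof -
  have k: "k < 14 * N" using assms length_bv2 by simp
  have e: "bv2 N ! k = (if k < 2*N then wpow (blk 1) N ! k else if k - 2*N < 3*N then wpow (blk 2) N ! (k - 2*N)
     else if k - 2*N - 3*N < 4 * N then wpow (blk 3) N ! (k - 2*N - 3*N) else wpow (blk 4) N ! (k - 2*N - 3*N - 4*N))"
    by (simp only: bv2_def nth_append lw)
  consider "k < 2*N" | "2*N \<le> k" "k < 5*N" | "5*N \<le> k" "k < 9*N" | "9*N \<le> k" by linarith
  then show ?thesis
  proof cases
    case 1
    have f: "F2 N k = (k mod 2 = 1)" using 1 by (simp add: F2_def)
    have g: "bv2 N ! k = wpow (blk 1) N ! k" using 1 e by simp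
    show ?thesis using f g b1[OF 1] by simp
  next
    case 2
    have h: "k - 2*N < 3*N" using 2 by simp
    have f: "F2 N k = ((k - 2*N) mod 3 = 2)" using 2 by (simp add: F2_def)
    have g: "bv2 N ! k = wpow (blk 2) N ! (k - 2*N)" using 2 h e by simp
    show ?thesis using f g b2[OF h] by simp
  next
    case 3
    have h: "\<not> k - 2*N < 3*N" "k - 2*N - 3*N < 4*N" "k - 2*N - 3*N = k - 5*N" using 3 by simp_all
    have f: "F2 N k = ((k - 5*N) mod 4 = 3)" using 3 by (simp add: F2_def)
    have g: "bv2 N ! k = wpow (blk 3) N ! (k - 5*N)" using 3 h e by simp
    show ?thesis using f g b3 h by simp
  next
    case 4
    have h: "\<not> k - 2*N < 3*N" "\<not> k - 2*N - 3*N < 4*N" "k - 2*N - 3*N - 4*N = k - 9*N" "k - 9*N < 5*N" using 4 k by simp_all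
    have f: "F2 N k = ((k - 9*N) mod 5 = 4)" using 4 by (simp add: F2_def)
    have g: "bv2 N ! k = wpow (blk 4) N ! (k - 9*N)" using 4 h e by simp
    show ?thesis using f g b4 h by simp
  qed
qed

definition z2 :: "nat \<Rightarrow> nat \<Rightarrow> nat" where
 "z2 N b = (if b < 2*N then 2 else if b < 5*N then 3 else if b < 9*N then 4 else 5)"

lemma F2a: "k < 2*N \<Longrightarrow> F2 N k = (k mod 2 = 1)" by (simp add: F2_def)
lemma F2b: "2*N \<le> k \<Longrightarrow> k < 5*N \<Longrightarrow> F2 N k = ((k - 2*N) mod 3 = 2)" by (simp add: F2_def)
lemma F2c: "5*N \<le> k \<Longrightarrow> k < 9*N \<Longrightarrow> F2 N k = ((k - 5*N) mod 4 = 3)" by (simp add: F2_def)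
lemma F2d: "9*N \<le> k \<Longrightarrow> F2 N k = ((k - 9*N) mod 5 = 4)" by (simp add: F2_def)

lemma modlem1: "(r::nat) mod m = m - 1 \<Longrightarrow> m \<le> r \<Longrightarrow> (r - m) mod m = m - 1"
  using le_mod_geq[of m r] by simp
lemma modlem2: "(r::nat) mod m = m - 1 \<Longrightarrow> r < m \<Longrightarrow> r = m - 1"
  by simp
lemma modlem3: "(r::nat) mod m = m - 1 \<Longrightarrow> 0 < m \<Longrightarrow> r < s + m \<Longrightarrow> s < r \<Longrightarrow> s mod m \<noteq> m - 1"
proof
  assume a: "r mod m = m - 1" "0 < m" "r < s + m" "s < r" "s mod m = m - 1"
  have "r = r div m * m + (m - 1)" "s = s div m * m + (m - 1)" using a
    by (metis mod_div_mult_eq add.commute)+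
  then have "r - s = (r div m - s div m) * m" by (simp add: diff_mult_distrib)
  moreover have "0 < r - s" "r - s < m" using a by auto
  ultimately show False by (metis less_not_refl mult_less_cancel2 nat_mult_1 less_one neq0_conv mult_eq_0_iff zero_less_diff)
qed

lemma h1: assumes "F2 N a" "F2 N b" "a < b" "b < 14*N" shows "z2 N b \<le> b \<and> F2 N (b - z2 N b)"
proof -
  consider (c1) "b < 2*N" | (c2) "2*N \<le> b" "b < 5*N" | (c3) "5*N \<le> b" "b < 9*N" | (c4) "9*N \<le> b" by linarith
  then show ?thesis
  proof cases
    case c1
    have "a mod 2 = 1" "b mod 2 = 1" using assms c1 by (simp_all add: F2_def)
    then have "2 \<le> b \<and> (b - 2) mod 2 = 1" using assms(3) by presburger
    then show ?thesis using c1 by (simp add: F2_def z2_def)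
  next
    case c2
    have r: "(b - 2*N) mod 3 = 2" using assms c2 by (simp add: F2_def)
    show ?thesis
    proof (cases "2*N + 3 \<le> b")
      case True
      have "(b - 2*N - 3) mod 3 = 2" using modlem1[of "b - 2*N" 3] r True by simp
      moreover have "b - 3 - 2*N = b - 2*N - 3" by simp
      ultimately have "(b - 3 - 2*N) mod 3 = 2" by simp
      moreover have zz: "2*N \<le> b - 3" "b - 3 < 5*N" using c2 True by arith+
      ultimately have "F2 N (b - 3)" using F2b by simp
      moreover have "z2 N b = 3" using c2 by (simp add: z2_def)
      ultimately show ?thesis using True by simp
    next
      case False
      have "b - 2*N = 2" using modlem2[of "b - 2*N" 3] r False by simp
      then have bb: "b - 3 = 2*N - 1" using c2 by arith
      have N1: "1 \<le> N" using c2 assms(4) by linarith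
      have mf: "(2*N - 1) mod 2 = 1" using N1 by (cases N) auto
      have "F2 N (2*N - 1)" using F2a mf N1 by simp
      moreover have "z2 N b = 3" using c2 by (simp add: z2_def)
      ultimately show ?thesis using bb N1 by simp
    qed
  next
    case c3
    have r: "(b - 5*N) mod 4 = 3" using assms c3 by (simp add: F2_def)
    show ?thesis
    proof (cases "5*N + 4 \<le> b")
      case True
      have "(b - 5*N - 4) mod 4 = 3" using modlem1[of "b - 5*N" 4] r True by simp
      moreover have "b - 4 - 5*N = b - 5*N - 4" by simp
      ultimately have "(b - 4 - 5*N) mod 4 = 3" by simp
      moreover have zz: "5*N \<le> b - 4" "b - 4 < 9*N" using c3 True by arith+
      ultimately have "F2 N (b - 4)" using F2c by simp
      moreover have "z2 N b = 4" using c3 by (simp add: z2_def)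
      ultimately show ?thesis using True by simp
    next
      case False
      have "b - 5*N = 3" using modlem2[of "b - 5*N" 4] r False by simp
      then have bb: "b - 4 = 5*N - 1" using c3 by arith
      have N1: "1 \<le> N" using c3 assms(4) by linarith
      obtain M where NM: "N = Suc M" using N1 by (cases N) auto
      have e: "5*N - 1 - 2*N = 2 + 3*M" using NM by simp
      have "(2 + 3*M) mod 3 = 2" by presburger
      then have mf: "(5*N - 1 - 2*N) mod 3 = 2" using e by simp
      have "F2 N (5*N - 1)" using F2b mf N1 by simp
      moreover have "z2 N b = 4" using c3 by (simp add: z2_def)
      ultimately show ?thesis using bb N1 by simp
    qed
  next
    case c4
    have r: "(b - 9*N) mod 5 = 4" using assms c4 by (simp add: F2_def)
    show ?thesis
    proof (cases "9*N + 5 \<le> b")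
      case True
      have "(b - 9*N - 5) mod 5 = 4" using modlem1[of "b - 9*N" 5] r True by simp
      moreover have "b - 5 - 9*N = b - 9*N - 5" by simp
      ultimately have "(b - 5 - 9*N) mod 5 = 4" by simp
      moreover have zz: "9*N \<le> b - 5" using c4 True by arith+
      ultimately have "F2 N (b - 5)" using F2d by simp
      moreover have "z2 N b = 5" using c4 by (simp add: z2_def)
      ultimately show ?thesis using True by simp
    next
      case False
      have "b - 9*N = 4" using modlem2[of "b - 9*N" 5] r False by simp
      then have bb: "b - 5 = 9*N - 1" using c4 by arith
      have N1: "1 \<le> N" using c4 assms(4) by linarith
      obtain M where NM: "N = Suc M" using N1 by (cases N) auto
      have e: "9*N - 1 - 5*N = 3 + 4*M" using NM by simp
      have "(3 + 4*M) mod 4 = 3" by simp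
      then have mf: "(9*N - 1 - 5*N) mod 4 = 3" using e by simp
      have "F2 N (9*N - 1)" using F2c mf N1 by simp
      moreover have "z2 N b = 5" using c4 by (simp add: z2_def)
      ultimately show ?thesis using bb N1 by simp
    qed
  qed
qed

lemma h2: assumes "F2 N b" "b - z2 N b < t" "t < b" shows "\<not> F2 N t"
proof -
  consider (c1) "b < 2*N" | (c2) "2*N \<le> b" "b < 5*N" | (c3) "5*N \<le> b" "b < 9*N" | (c4) "9*N \<le> b" by linarith
  then show ?thesis
  proof cases
    case c1
    have "b mod 2 = 1" "t = b - 1" using assms c1 by (auto simp: F2_def z2_def)
    then have "t mod 2 \<noteq> 1" by presburger
    then show ?thesis using c1 assms by (simp add: F2_def)
  next
    case c2
    have r: "(b - 2*N) mod 3 = 2" using assms c2 by (simp add: F2_def)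
    have zz: "z2 N b = 3" using c2 by (simp add: z2_def)
    show ?thesis
    proof (cases "2*N \<le> t")
      case True
      have bt: "b - 3 < t" using assms zz by simp
      have i1a: "b - 2*N < t - 2*N + 3" using bt True by arith
      have i1b: "t - 2*N < b - 2*N" using assms zz True by arith
      note i1 = i1a i1b
      have "(t - 2*N) mod 3 \<noteq> 3 - 1" using modlem3[of "b - 2*N" 3 "t - 2*N"] r i1 by simp
      then show ?thesis using True c2 assms by (simp add: F2_def)
    next
      case False
      have "b - 2*N = 2" using modlem2[of "b - 2*N" 3] r False assms zz by simp
      then show ?thesis using False assms zz by simp
    qed
  next
    case c3
    have r: "(b - 5*N) mod 4 = 3" using assms c3 by (simp add: F2_def)
    have zz: "z2 N b = 4" using c3 by (simp add: z2_def)
    show ?thesis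
    proof (cases "5*N \<le> t")
      case True
      have bt: "b - 4 < t" using assms zz by simp
      have i1a: "b - 5*N < t - 5*N + 4" using bt True by arith
      have i1b: "t - 5*N < b - 5*N" using assms zz True by arith
      note i1 = i1a i1b
      have "(t - 5*N) mod 4 \<noteq> 4 - 1" using modlem3[of "b - 5*N" 4 "t - 5*N"] r i1 by simp
      then show ?thesis using True c3 assms by (simp add: F2_def)
    next
      case False
      have "b - 5*N = 3" using modlem2[of "b - 5*N" 4] r False assms zz by simp
      then show ?thesis using False assms zz by simp
    qed
  next
    case c4
    have r: "(b - 9*N) mod 5 = 4" using assms c4 by (simp add: F2_def)
    have zz: "z2 N b = 5" using c4 by (simp add: z2_def)
    show ?thesis
    proof (cases "9*N \<le> t")
      case True
      have bt: "b - 5 < t" using assms zz by simp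
      have i1a: "b - 9*N < t - 9*N + 5" using bt True by arith
      have i1b: "t - 9*N < b - 9*N" using assms zz True by arith
      note i1 = i1a i1b
      have "(t - 9*N) mod 5 \<noteq> 5 - 1" using modlem3[of "b - 9*N" 5 "t - 9*N"] r i1 by simp
      then show ?thesis using True c4 assms by (simp add: F2_def)
    next
      case False
      have "b - 9*N = 4" using modlem2[of "b - 9*N" 5] r False assms zz by simp
      then show ?thesis using False assms zz by simp
    qed
  qed
qed

lemma gm2: "gapmono (bv2 N)"
proof (rule gapmono_F[where F = "F2 N" and z = "z2 N", OF bv2_nth])
  show "\<And>a b. F2 N a \<Longrightarrow> F2 N b \<Longrightarrow> a < b \<Longrightarrow> b < length (bv2 N) \<Longrightarrow> z2 N b \<le> b \<and> F2 N (b - z2 N b)"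
    using h1 length_bv2 by simp
  show "\<And>b t. F2 N b \<Longrightarrow> b < length (bv2 N) \<Longrightarrow> b - z2 N b < t \<Longrightarrow> t < b \<Longrightarrow> \<not> F2 N t"
    using h2 by blast
  show "\<And>x y. x \<le> y \<Longrightarrow> z2 N x \<le> z2 N y" by (simp add: z2_def)
  show "\<And>b. 0 < z2 N b" by (simp add: z2_def)
qed


definition bv1 :: "bool list" where "bv1 = wpow (blk 1) 4 @ wpow (blk 2) 8 @ wpow (blk 3) 9"
definition bv4 :: "bool list" where "bv4 = wpow (blk 1) 4 @ wpow (blk 2) 4 @ wpow (blk 3) 9"
definition bv3 :: "bool list" where "bv3 = wpow [False] 8 @ wpow (True # wpow [False] 6) 8 @ wpow [False] 3"
definition z1 :: "nat \<Rightarrow> nat" where "z1 k = (if k < 8 then 2 else if k < 32 then 3 else 4)"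
definition z4 :: "nat \<Rightarrow> nat" where "z4 k = (if k < 8 then 2 else if k < 20 then 3 else 4)"

lemma wpow_code[code]: "wpow w n = concat (replicate n w)" by (simp add: wpow_def)

lemma ball_upt: "(\<forall>t. a < t \<and> t < b \<longrightarrow> P t) \<longleftrightarrow> list_all P [Suc a..<b]"
  by (auto simp: list_all_iff)
lemma ball_lt: "(\<forall>t. t < b \<longrightarrow> P t) \<longleftrightarrow> list_all P [0..<b]"
  by (auto simp: list_all_iff)

lemma gapmono_conc:
  assumes "list_all (\<lambda>b. w ! b \<longrightarrow> list_ex (\<lambda>a. w ! a) [0..<b] \<longrightarrow> z b \<le> b \<and> w ! (b - z b)) [0..<length w]"
    and "list_all (\<lambda>b. w ! b \<longrightarrow> list_all (\<lambda>t. \<not> w ! t) [Suc (b - z b)..<b]) [0..<length w]"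
    and "\<And>x y. x \<le> y \<Longrightarrow> z x \<le> z y" and "\<And>b. 0 < z b"
  shows "gapmono w"
proof (rule gapmono_F[where F = "\<lambda>k. w ! k" and z = z])
  show "\<And>a b. w ! a \<Longrightarrow> w ! b \<Longrightarrow> a < b \<Longrightarrow> b < length w \<Longrightarrow> z b \<le> b \<and> w ! (b - z b)"
    using assms(1) by (auto simp: list_all_iff list_ex_iff)
  show "\<And>b t. w ! b \<Longrightarrow> b < length w \<Longrightarrow> b - z b < t \<Longrightarrow> t < b \<Longrightarrow> \<not> w ! t"
    using assms(2) by (auto simp: list_all_iff)
qed (use assms in auto)

lemma gm1: "gapmono bv1"
proof (rule gapmono_conc[where z = z1])
  show "list_all (\<lambda>b. bv1 ! b \<longrightarrow> list_ex (\<lambda>a. bv1 ! a) [0..<b] \<longrightarrow> z1 b \<le> b \<and> bv1 ! (b - z1 b)) [0..<length bv1]"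
    by code_simp
  show "list_all (\<lambda>b. bv1 ! b \<longrightarrow> list_all (\<lambda>t. \<not> bv1 ! t) [Suc (b - z1 b)..<b]) [0..<length bv1]"
    by code_simp
qed (auto simp: z1_def)

lemma gm4: "gapmono bv4"
proof (rule gapmono_conc[where z = z4])
  show "list_all (\<lambda>b. bv4 ! b \<longrightarrow> list_ex (\<lambda>a. bv4 ! a) [0..<b] \<longrightarrow> z4 b \<le> b \<and> bv4 ! (b - z4 b)) [0..<length bv4]"
    by code_simp
  show "list_all (\<lambda>b. bv4 ! b \<longrightarrow> list_all (\<lambda>t. \<not> bv4 ! t) [Suc (b - z4 b)..<b]) [0..<length bv4]"
    by code_simp
qed (auto simp: z4_def)

lemma cpair_code: "cpair w a b \<longleftrightarrow> a < b \<and> b < length w \<and> w ! a \<and> w ! b \<and> list_all (\<lambda>t. \<not> w ! t) [Suc a..<b]"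
  unfolding cpair_def ball_upt by simp

lemma length_bv1: "length bv1 = 68" by code_simp
lemma length_bv4: "length bv4 = 56" by code_simp
lemma length_bv3: "length bv3 = 67" by code_simp

lemma cp1: "cpair bv1 5 7" "cpair bv1 7 10" "cpair bv1 28 31" "cpair bv1 31 35"
  unfolding cpair_code by code_simp+
lemma cp4: "cpair bv4 5 7" "cpair bv4 7 10" "cpair bv4 16 19" "cpair bv4 19 23"
  unfolding cpair_code by code_simp+

lemma cpair_F: "(\<And>k. k < length w \<Longrightarrow> w ! k = F k) \<Longrightarrow>
   cpair w a b \<longleftrightarrow> a < b \<and> b < length w \<and> F a \<and> F b \<and> (\<forall>t. a < t \<and> t < b \<longrightarrow> \<not> F t)"
  unfolding cpair_def by (metis less_trans)

lemma cpF2: assumes "F2 N a" "F2 N b" "a < b" "b < 14*N" "b - z2 N b = a" shows "cpair (bv2 N) a b"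
proof -
  have nth: "\<And>k. k < length (bv2 N) \<Longrightarrow> bv2 N ! k = F2 N k" by (rule bv2_nth)
  have l: "length (bv2 N) = 14 * N" by (rule length_bv2)
  show ?thesis unfolding cpair_def l using assms h2[of N b] nth l by auto
qed

lemma cp2: assumes "3 \<le> N"
  shows "cpair (bv2 N) (2*N-3) (2*N-1)" "cpair (bv2 N) (2*N-1) (2*N+2)"
    "cpair (bv2 N) (5*N-4) (5*N-1)" "cpair (bv2 N) (5*N-1) (5*N+3)"
    "cpair (bv2 N) (9*N-5) (9*N-1)" "cpair (bv2 N) (9*N-1) (9*N+4)"
proof -
  obtain M where NM: "N = M + 3" using assms by (metis add.commute le_Suc_ex)
  have e1: "2*N-3 = 2*M+3" "2*N-1 = 2*M+5" using NM by simp_all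
  have m1: "(2*M+3) mod 2 = 1" "(2*M+5) mod 2 = 1" by presburger+
  have f1: "F2 N (2*N-3)" "F2 N (2*N-1)"
    using F2a[of "2*N-3" N] F2a[of "2*N-1" N] e1 m1 NM by simp_all
  have f2: "F2 N (2*N+2)" using F2b[of N "2*N+2"] NM by simp
  have e3: "5*N-4-2*N = 3*M+5" "5*N-1-2*N = 3*M+8" using NM by simp_all
  have m3: "(3*M+5) mod 3 = 2" "(3*M+8) mod 3 = 2" by presburger+
  have f3: "F2 N (5*N-4)" "F2 N (5*N-1)"
    using F2b[of N "5*N-4"] F2b[of N "5*N-1"] e3 m3 NM by simp_all
  have f4: "F2 N (5*N+3)" using F2c[of N "5*N+3"] NM by simp
  have e5: "9*N-5-5*N = 4*M+7" "9*N-1-5*N = 4*M+11" using NM by simp_all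
  have m5: "(4*M+7) mod 4 = 3" "(4*M+11) mod 4 = 3" by presburger+
  have f5: "F2 N (9*N-5)" "F2 N (9*N-1)"
    using F2c[of N "9*N-5"] F2c[of N "9*N-1"] e5 m5 NM by simp_all
  have f6: "F2 N (9*N+4)" using F2d[of N "9*N+4"] NM by simp
  show "cpair (bv2 N) (2*N-3) (2*N-1)" by (rule cpF2) (use f1 NM in \<open>auto simp: z2_def\<close>)
  show "cpair (bv2 N) (2*N-1) (2*N+2)" by (rule cpF2) (use f1 f2 NM in \<open>auto simp: z2_def\<close>)
  show "cpair (bv2 N) (5*N-4) (5*N-1)" by (rule cpF2) (use f3 NM in \<open>auto simp: z2_def\<close>)
  show "cpair (bv2 N) (5*N-1) (5*N+3)" by (rule cpF2) (use f3 f4 NM in \<open>auto simp: z2_def\<close>)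
  show "cpair (bv2 N) (9*N-5) (9*N-1)" by (rule cpF2) (use f5 NM in \<open>auto simp: z2_def\<close>)
  show "cpair (bv2 N) (9*N-1) (9*N+4)" by (rule cpF2) (use f5 f6 NM in \<open>auto simp: z2_def\<close>)
qed


definition ispow :: "bool list \<Rightarrow> nat \<Rightarrow> bool" where
 "ispow v n = (length v mod n = 0 \<and> wpow (take (length v div n) v) n = v)"

lemma ispow_wpow: "0 < n \<Longrightarrow> ispow (wpow u n) n"
proof -
  assume n: "0 < n"
  then obtain m where m: "n = Suc m" by (cases n) auto
  have "take (length u) (wpow u n) = u" using m by (simp add: wpow_Suc)
  then show ?thesis using n by (simp add: ispow_def)
qed

lemma chk1: "list_all (\<lambda>q. list_all (\<lambda>n. ispow (take q bv1) n \<longrightarrow> (q,n) \<in> set [(6,3),(8,2),(8,4)]) [2..<10]) [6..<11]"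
  by code_simp
lemma chk3: "list_all (\<lambda>q. list_all (\<lambda>n. ispow (drop q bv1) n \<longrightarrow> (q,n) \<in> set [(32,3),(32,9)]) [2..<10]) [29..<36]"
  by code_simp
lemma chk2: "list_all (\<lambda>n. \<not> ispow (take 26 (drop 6 bv1)) n) [2..<10]"
  by code_simp
lemma chk4: "list_all (\<lambda>n. ispow (take 24 (drop 8 bv1)) n \<longrightarrow> n \<in> {2,4,8}) [2..<10]"
  by code_simp
lemma chk5: "list_all (\<lambda>a. list_all (\<lambda>b. 4*a + 8*b \<le> 67 \<longrightarrow>
    \<not> (ispow (take (4*a) bv3) 4 \<and> ispow (take (8*b) (drop (4*a) bv3)) 8 \<and> ispow (drop (4*a+8*b) bv3) 9))
    [0..<9]) [0..<17]"
  by code_simp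

lemma parts:
  assumes "w = wpow u1 n1 @ wpow u2 n2 @ wpow u3 n3"
  shows "take (n1 * length u1) w = wpow u1 n1"
    "take (n2 * length u2) (drop (n1 * length u1) w) = wpow u2 n2"
    "drop (n1 * length u1 + n2 * length u2) w = wpow u3 n3"
  using assms by auto

lemma v1_parts:
  assumes w: "bv1 = wpow u1 n1 @ wpow u2 n2 @ wpow u3 n3"
    and n: "2 \<le> n1" "2 \<le> n2" "2 \<le> n3" "n1 \<le> 9" "n2 \<le> 9" "n3 \<le> 9"
  shows "n1 \<in> {2,4} \<and> n2 \<in> {2,4,8} \<and> n3 \<in> {3,9}"
proof -
  define q1 where "q1 = n1 * length u1"
  define q2 where "q2 = q1 + n2 * length u2"
  note cp = cp1
  have s1: "(5 < q1 \<and> q1 \<le> 10) \<or> (5 < q2 \<and> q2 \<le> 10)"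
    using straddle[OF gm1 w n(1-3) cp(1) cp(2)] q1_def q2_def by simp
  have s2: "(28 < q1 \<and> q1 \<le> 35) \<or> (28 < q2 \<and> q2 \<le> 35)"
    using straddle[OF gm1 w n(1-3) cp(3) cp(4)] q1_def q2_def by simp
  have qq: "q1 \<le> q2" using q2_def by simp
  have r: "5 < q1 \<and> q1 \<le> 10 \<and> 28 < q2 \<and> q2 \<le> 35" using s1 s2 qq by linarith
  have p1: "ispow (take q1 bv1) n1" using parts(1)[OF w] ispow_wpow n q1_def by simp
  have p2: "ispow (take (q2 - q1) (drop q1 bv1)) n2" using parts(2)[OF w] ispow_wpow n q1_def q2_def by simp
  have p3: "ispow (drop q2 bv1) n3" using parts(3)[OF w] ispow_wpow n q1_def q2_def by simp
  have n1r: "n1 \<in> set [2..<10]" and n2r: "n2 \<in> set [2..<10]" and n3r: "n3 \<in> set [2..<10]" using n by auto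
  have q1r: "q1 \<in> set [6..<11]" and q2r: "q2 \<in> set [29..<36]" using r by auto
  have A: "(q1, n1) \<in> set [(6,3),(8,2),(8,4)]"
    using chk1 q1r n1r p1 unfolding list_all_iff by blast
  have B: "(q2, n3) \<in> set [(32,3),(32,9)]"
    using chk3 q2r n3r p3 unfolding list_all_iff by blast
  have "q1 = 8"
  proof (rule ccontr)
    assume "q1 \<noteq> 8"
    then have "q1 = 6" using A by auto
    moreover have "q2 = 32" using B by auto
    ultimately show False using chk2 n2r p2 unfolding list_all_iff by auto
  qed
  moreover have "q2 = 32" using B by auto
  ultimately have "n2 \<in> {2,4,8}" using chk4 n2r p2 unfolding list_all_iff by auto
  then show ?thesis using A B \<open>q1 = 8\<close> by auto
qed

lemma v4_not:
  assumes w: "bv4 = wpow u1 4 @ wpow u2 8 @ wpow u3 9" shows False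
proof -
  define q1 where "q1 = 4 * length u1"
  define q2 where "q2 = q1 + 8 * length u2"
  note cp = cp4
  have s1: "(5 < q1 \<and> q1 \<le> 10) \<or> (5 < q2 \<and> q2 \<le> 10)"
    using straddle[OF gm4 w _ _ _ cp(1) cp(2)] q1_def q2_def by simp
  have s2: "(16 < q1 \<and> q1 \<le> 23) \<or> (16 < q2 \<and> q2 \<le> 23)"
    using straddle[OF gm4 w _ _ _ cp(3) cp(4)] q1_def q2_def by simp
  show False using s1 s2 q1_def q2_def by presburger
qed

lemma v2_not:
  assumes w: "bv2 N = wpow u1 n1 @ wpow u2 n2 @ wpow u3 n3"
    and n: "2 \<le> n1" "2 \<le> n2" "2 \<le> n3" and N: "3 \<le> N"
  shows False
proof -
  define q1 where "q1 = n1 * length u1"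
  define q2 where "q2 = q1 + n2 * length u2"
  note cp = cp2[OF N]
  have s1: "(2*N-3 < q1 \<and> q1 \<le> 2*N+2) \<or> (2*N-3 < q2 \<and> q2 \<le> 2*N+2)"
    using straddle[OF gm2 w n cp(1) cp(2)] q1_def q2_def N by simp
  have s2: "(5*N-4 < q1 \<and> q1 \<le> 5*N+3) \<or> (5*N-4 < q2 \<and> q2 \<le> 5*N+3)"
    using straddle[OF gm2 w n cp(3) cp(4)] q1_def q2_def N by simp
  have s3: "(9*N-5 < q1 \<and> q1 \<le> 9*N+4) \<or> (9*N-5 < q2 \<and> q2 \<le> 9*N+4)"
    using straddle[OF gm2 w n cp(5) cp(6)] q1_def q2_def N by simp
  show False using s1 s2 s3 N by linarith
qed

lemma v3_not:
  assumes w: "bv3 = wpow u1 4 @ wpow u2 8 @ wpow u3 9" shows False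
proof -
  have l: "length bv3 = 67" by (rule length_bv3)
  have p1: "ispow (take (4 * length u1) bv3) 4" using parts(1)[OF w] ispow_wpow by simp
  have p2: "ispow (take (8 * length u2) (drop (4 * length u1) bv3)) 8" using parts(2)[OF w] ispow_wpow by simp
  have p3: "ispow (drop (4 * length u1 + 8 * length u2) bv3) 9" using parts(3)[OF w] ispow_wpow by simp
  have le: "4 * length u1 + 8 * length u2 \<le> 67" using arg_cong[OF w, of length] l by simp
  then have "length u1 \<in> set [0..<17]" "length u2 \<in> set [0..<9]" by auto
  then show False using chk5 le p1 p2 p3 unfolding list_all_iff by blast
qed


definition memL :: "'b list \<Rightarrow> nat list \<Rightarrow> bool" where
  "memL w ns \<longleftrightarrow> (\<exists>us. length us = length ns \<and> w = concat (map2 wpow us ns))"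

lemma map_concat_map2: "length us = length ns \<Longrightarrow>
   map f (concat (map2 wpow us ns)) = concat (map2 wpow (map (map f) us) ns)"
proof (induction us arbitrary: ns)
  case Nil then show ?case by simp
next
  case (Cons u us) then show ?case by (cases ns) (auto simp: map_wpow)
qed

lemma memL_map: assumes "inj f" shows "memL (map f w) ns \<longleftrightarrow> memL w ns"
proof
  assume "memL (map f w) ns"
  then obtain us where us: "length us = length ns" "map f w = concat (map2 wpow us ns)"
    unfolding memL_def by blast
  have "map (inv f) (map f w) = w" using assms by (simp add: inv_f_f)
  then have "w = concat (map2 wpow (map (map (inv f)) us) ns)"
    using us map_concat_map2[OF us(1), of "inv f"] by simp
  then show "memL w ns" unfolding memL_def using us(1) by (intro exI[of _ "map (map (inv f)) us"]) simp
next
  assume "memL w ns"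
  then obtain us where us: "length us = length ns" "w = concat (map2 wpow us ns)"
    unfolding memL_def by blast
  then show "memL (map f w) ns" unfolding memL_def using map_concat_map2[OF us(1), of f]
    by (intro exI[of _ "map (map f) us"]) simp
qed

lemma memL3: "memL w [a, b, c] \<longleftrightarrow> (\<exists>u1 u2 u3. w = wpow u1 a @ wpow u2 b @ wpow u3 c)"
proof
  assume "memL w [a, b, c]"
  then have "\<exists>us. length us = length [a,b,c] \<and> w = concat (map2 wpow us [a,b,c])" unfolding memL_def .
  then obtain us where us: "length us = Suc (Suc (Suc 0))" "w = concat (map2 wpow us [a,b,c])" by auto
  then obtain u1 u2 u3 where "us = [u1, u2, u3]" by (auto simp: length_Suc_conv)
  then show "\<exists>u1 u2 u3. w = wpow u1 a @ wpow u2 b @ wpow u3 c" using us by auto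
next
  assume "\<exists>u1 u2 u3. w = wpow u1 a @ wpow u2 b @ wpow u3 c"
  then obtain u1 u2 u3 where "w = wpow u1 a @ wpow u2 b @ wpow u3 c" by blast
  then show "memL w [a, b, c]" unfolding memL_def by (intro exI[of _ "[u1,u2,u3]"]) simp
qed

lemma memL2: "memL w [a, b] \<longleftrightarrow> (\<exists>u1 u2. w = wpow u1 a @ wpow u2 b)"
proof
  assume "memL w [a, b]"
  then have "\<exists>us. length us = length [a,b] \<and> w = concat (map2 wpow us [a,b])" unfolding memL_def .
  then obtain us where us: "length us = Suc (Suc 0)" "w = concat (map2 wpow us [a,b])" by auto
  then obtain u1 u2 where "us = [u1, u2]" by (auto simp: length_Suc_conv)
  then show "\<exists>u1 u2. w = wpow u1 a @ wpow u2 b" using us by auto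
next
  assume "\<exists>u1 u2. w = wpow u1 a @ wpow u2 b"
  then obtain u1 u2 where "w = wpow u1 a @ wpow u2 b" by blast
  then show "memL w [a, b]" unfolding memL_def by (intro exI[of _ "[u1,u2]"]) simp
qed

lemma memL1: "memL w [a] \<longleftrightarrow> (\<exists>u1. w = wpow u1 a)"
proof
  assume "memL w [a]"
  then have "\<exists>us. length us = length [a] \<and> w = concat (map2 wpow us [a])" unfolding memL_def .
  then obtain us where us: "length us = 1" "w = concat (map2 wpow us [a])" by auto
  then obtain u1 where "us = [u1]" by (auto simp: length_Suc_conv)
  then show "\<exists>u1. w = wpow u1 a" using us by auto
next
  assume "\<exists>u1. w = wpow u1 a"
  then obtain u1 where "w = wpow u1 a" by blast
  then show "memL w [a]" unfolding memL_def by (intro exI[of _ "[u1]"]) simp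
qed

lemma concat_map2_nil: "length ns = k \<Longrightarrow> concat (map2 wpow (replicate k []) ns) = []"
  by (induction ns arbitrary: k) auto

lemma memL_one: "1 \<in> set ns \<Longrightarrow> memL w ns"
proof (induction ns)
  case Nil then show ?case by simp
next
  case (Cons n ns)
  show ?case
  proof (cases "n = 1")
    case True
    show ?thesis unfolding memL_def
      by (intro exI[of _ "w # replicate (length ns) []"]) (simp add: True concat_map2_nil wpow_def)
  next
    case False
    then have "memL w ns" using Cons by simp
    then obtain us where "length us = length ns" "w = concat (map2 wpow us ns)" unfolding memL_def by blast
    then show ?thesis unfolding memL_def by (intro exI[of _ "[] # us"]) simp
  qed
qed

lemma memL_bv2:
  assumes "length ns \<ge> 4" "\<forall>n\<in>set ns. n dvd N"
  shows "memL (bv2 N) ns"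
proof -
  obtain a b c d rest where ns: "ns = a # b # c # d # rest" using assms(1)
    by (auto simp: numeral_eq_Suc Suc_le_length_iff)
  have dv: "a dvd N" "b dvd N" "c dvd N" "d dvd N" using assms(2) ns by auto
  have k: "\<And>x w. x dvd N \<Longrightarrow> wpow (wpow w (N div x)) x = wpow w N"
    by (simp add: wpow_mult)
  show ?thesis unfolding memL_def
    apply (intro exI[of _ "[wpow (blk 1) (N div a), wpow (blk 2) (N div b), wpow (blk 3) (N div c),
                           wpow (blk 4) (N div d)] @ replicate (length rest) []"])
    using dv by (simp add: ns k concat_map2_nil bv2_def)
qed

lemma bv3_alt: "bv3 = wpow [False] 2 @ wpow (wpow [False] 6 @ [True]) 8 @ wpow [False] 9"
  by code_simp

lemma memL_bv3a: "a dvd 8 \<Longrightarrow> b dvd 8 \<Longrightarrow> memL bv3 [a, b, 3]"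
  unfolding memL3 bv3_def
  by (rule exI[of _ "wpow [False] (8 div a)"], rule exI[of _ "wpow (True # wpow [False] 6) (8 div b)"],
      rule exI[of _ "[False]"]) (simp add: wpow_mult)

lemma memL_bv3b: "b dvd 8 \<Longrightarrow> memL bv3 [2, b, 9]"
  unfolding memL3 bv3_alt
  by (rule exI[of _ "[False]"], rule exI[of _ "wpow (wpow [False] 6 @ [True]) (8 div b)"],
      rule exI[of _ "[False]"]) (simp add: wpow_mult)

lemma memL_bv4: "a dvd 4 \<Longrightarrow> b dvd 4 \<Longrightarrow> memL bv4 [a, b, 9]"
  unfolding memL3 bv4_def
  by (rule exI[of _ "wpow (blk 1) (4 div a)"], rule exI[of _ "wpow (blk 2) (4 div b)"],
      rule exI[of _ "blk 3"]) (simp add: wpow_mult)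

lemma key:
  assumes ne: "ns \<noteq> []" and rng: "\<forall>n\<in>set ns. 1 \<le> n \<and> n \<le> 9"
    and m1: "memL bv1 ns" and m2: "\<not> memL (bv2 (fact 9)) ns"
    and m3: "\<not> memL bv3 ns" and m4: "\<not> memL bv4 ns"
  shows "ns = [4, 8, 9]"
proof -
  have no1: "1 \<notin> set ns" using memL_one m3 by blast
  have rng2: "\<forall>n\<in>set ns. 2 \<le> n \<and> n \<le> 9" using rng no1
    by (metis Suc_1 Suc_leI le_neq_implies_less One_nat_def)
  have len: "length ns \<le> 3"
  proof (rule ccontr)
    assume "\<not> length ns \<le> 3"
    then have "length ns \<ge> 4" by simp
    moreover have "\<forall>n\<in>set ns. n dvd fact 9" using rng by (auto intro: dvd_fact)
    ultimately show False using memL_bv2 m2 by blast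
  qed
  consider (l1) a where "ns = [a]" | (l2) a b where "ns = [a, b]" | (l3) a b c where "ns = [a, b, c]"
    using ne len by (cases ns; cases "tl ns"; cases "tl (tl ns)"; auto)
  then show ?thesis
  proof cases
    case l1
    then obtain u1 where "bv1 = wpow u1 a" using m1 memL1 by blast
    then have "bv1 = wpow u1 a @ wpow [] 2 @ wpow [] 2" by simp
    then show ?thesis using v1_parts[of u1 a "[]" 2 "[]" 2] rng2 l1 by auto
  next
    case l2
    then obtain u1 u2 where "bv1 = wpow u1 a @ wpow u2 b" using m1 memL2 by blast
    then have "bv1 = wpow u1 a @ wpow u2 b @ wpow [] 2" by simp
    then show ?thesis using v1_parts[of u1 a u2 b "[]" 2] rng2 l2 by auto
  next
    case l3
    then obtain u1 u2 u3 where "bv1 = wpow u1 a @ wpow u2 b @ wpow u3 c" using m1 memL3 by blast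
    then have abc: "a \<in> {2,4}" "b \<in> {2,4,8}" "c \<in> {3,9}" using v1_parts[of u1 a u2 b u3 c] rng2 l3 by auto
    have a8: "a dvd 8" and b8: "b dvd 8" using abc by auto
    have c9: "c = 9"
    proof (rule ccontr)
      assume "c \<noteq> 9" then have "c = 3" using abc by auto
      then show False using memL_bv3a[OF a8 b8] m3 l3 by simp
    qed
    have a4: "a = 4"
    proof (rule ccontr)
      assume "a \<noteq> 4" then have "a = 2" using abc by auto
      then show False using memL_bv3b[OF b8] m3 l3 c9 by simp
    qed
    have b8': "b = 8"
    proof (rule ccontr)
      assume "b \<noteq> 8" then have "b dvd 4" using abc by auto
      then show False using memL_bv4[of a b] a4 m4 l3 c9 by simp
    qed
    show ?thesis using l3 a4 b8' c9 by simp
  qed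
qed


lemma subst_Nil[simp]: "subst h [] = []" by (simp add: subst_def)
lemma subst_append: "subst h (p @ q) = subst h p @ subst h q" by (simp add: subst_def)
lemma subst_rep: "subst h (replicate n (Var x)) = wpow (h x) n"
  by (simp add: subst_def wpow_def map_replicate)

lemma subst_nc: "subst h (concat (map (\<lambda>(x, n). replicate n (Var x)) (zip xs ns))) = concat (map2 wpow (map h xs) ns)"
proof (induction xs arbitrary: ns)
  case Nil then show ?case by simp
next
  case (Cons x xs) then show ?case by (cases ns) (auto simp: subst_append subst_rep)
qed

lemma map_of_zip_the: "distinct xs \<Longrightarrow> length xs = length us \<Longrightarrow> map (\<lambda>x. the (map_of (zip xs us) x)) xs = us"
proof (induction xs arbitrary: us)
  case Nil then show ?case by simp
next
  case (Cons x xs)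
  then obtain u us' where us: "us = u # us'" by (cases us) auto
  have "map (\<lambda>y. the (map_of (zip (x # xs) us) y)) xs = map (\<lambda>y. the (map_of (zip xs us') y)) xs"
    using Cons.prems us by (intro map_cong) auto
  also have "\<dots> = us'" using Cons.IH[of us'] Cons.prems us by simp
  finally have B: "map (\<lambda>y. the (map_of (zip (x # xs) us) y)) xs = us'" .
  have "map (\<lambda>y. the (map_of (zip (x # xs) us) y)) (x # xs) = u # map (\<lambda>y. the (map_of (zip (x # xs) us) y)) xs"
    using us by simp
  then show ?case using B us by simp
qed

lemma lang_nc: assumes "distinct xs" "length xs = length ns"
  shows "lang (concat (map (\<lambda>(x, n). replicate n (Var x)) (zip xs ns))) = {w. memL w ns}"
proof
  show "lang (concat (map (\<lambda>(x, n). replicate n (Var x)) (zip xs ns))) \<subseteq> {w. memL w ns}"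
  proof
    fix w assume "w \<in> lang (concat (map (\<lambda>(x, n). replicate n (Var x)) (zip xs ns)))"
    then obtain h where "w = subst h (concat (map (\<lambda>(x, n). replicate n (Var x)) (zip xs ns)))"
      unfolding lang_def by blast
    then have "w = concat (map2 wpow (map h xs) ns)" by (simp add: subst_nc)
    then show "w \<in> {w. memL w ns}" unfolding memL_def using assms(2)
      by (intro CollectI exI[of _ "map h xs"]) simp
  qed
next
  show "{w. memL w ns} \<subseteq> lang (concat (map (\<lambda>(x, n). replicate n (Var x)) (zip xs ns)))"
  proof
    fix w assume "w \<in> {w. memL w ns}"
    then obtain us where us: "length us = length ns" "w = concat (map2 wpow us ns)" unfolding memL_def by auto
    define h where "h = (\<lambda>x. the (map_of (zip xs us) x))"
    have "map h xs = us" unfolding h_def by (rule map_of_zip_the) (use assms us in auto)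
    then have "w = subst h (concat (map (\<lambda>(x, n). replicate n (Var x)) (zip xs ns)))"
      using us by (simp add: subst_nc)
    then show "w \<in> lang (concat (map (\<lambda>(x, n). replicate n (Var x)) (zip xs ns)))"
      unfolding lang_def by blast
  qed
qed

lemma count_rep: "count_list (replicate n y) y = n" by (induction n) auto

lemma count_nc: "(x, n) \<in> set (zip xs ns) \<Longrightarrow> n \<le> count_list (concat (map (\<lambda>(x, n). replicate n (Var x)) (zip xs ns))) (Var x)"
proof (induction xs arbitrary: ns)
  case Nil then show ?case by simp
next
  case (Cons y xs)
  then obtain a list where ns: "ns = a # list" by (cases ns) auto
  show ?case
  proof (cases "(x, n) = (y, a)")
    case True then show ?thesis using ns by (simp add: count_rep)
  next
    case False
    then have "(x, n) \<in> set (zip xs list)" using Cons.prems ns by auto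
    from Cons.IH[OF this] show ?thesis using ns by simp
  qed
qed

lemma in_zip_ex: "n \<in> set ns \<Longrightarrow> length xs = length ns \<Longrightarrow> \<exists>x. (x, n) \<in> set (zip xs ns)"
  by (metis in_set_conv_nth in_set_zip fst_conv snd_conv)


theorem mainTheorem13:
  fixes zero one :: "'a"
  assumes "finite (UNIV :: 'a set)"
    and "zero \<noteq> one"
  defines "\<pi> \<equiv> replicate 4 (Var 1) @ replicate 8 (Var 2) @ replicate 9 (Var 3) :: 'a pattern"
    and "v1 \<equiv> wpow [zero, one] 4 @ wpow [zero, zero, one] 8 @ wpow [zero, zero, zero, one] 9"
    and "v2 \<equiv> wpow [zero, one] (fact 9) @ wpow [zero, zero, one] (fact 9)
              @ wpow [zero, zero, zero, one] (fact 9) @ wpow [zero, zero, zero, zero, one] (fact 9)"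
    and "v3 \<equiv> wpow [zero] 8 @ wpow (one # wpow [zero] 6) 8 @ wpow [zero] 3"
    and "v4 \<equiv> wpow [zero, one] 4 @ wpow [zero, zero, one] 4 @ wpow [zero, zero, zero, one] 9"
  shows "TD \<pi> (NC_class 9) \<le> 4
         \<and> teaching_set \<pi> (NC_class 9) {(v1, True), (v2, False), (v3, False), (v4, False)}"
proof -
  define T where "T = {(v1, True), (v2, False), (v3, False), (v4, False)}"
  define \<phi> :: "bool \<Rightarrow> 'a" where "\<phi> b = (if b then one else zero)" for b
  have inj: "inj \<phi>" using assms(2) unfolding inj_def \<phi>_def by auto
  have bl: "map \<phi> (blk 1) = [zero, one]" "map \<phi> (blk 2) = [zero, zero, one]"
    "map \<phi> (blk 3) = [zero, zero, zero, one]" "map \<phi> (blk 4) = [zero, zero, zero, zero, one]"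
    by (simp_all add: blk_def \<phi>_def numeral_eq_Suc)
  have e1: "v1 = map \<phi> bv1" unfolding v1_def bv1_def by (simp only: map_append map_wpow bl)
  have e2: "v2 = map \<phi> (bv2 (fact 9))" unfolding v2_def bv2_def by (simp only: map_append map_wpow bl)
  have e3: "v3 = map \<phi> bv3" unfolding v3_def bv3_def by (simp add: map_wpow \<phi>_def)
  have e4: "v4 = map \<phi> bv4" unfolding v4_def bv4_def by (simp only: map_append map_wpow bl)
  have pidef: "\<pi> = concat (map (\<lambda>(x, n). replicate n (Var x)) (zip [1, 2, 3] [4, 8, 9]))"
    unfolding \<pi>_def by simp
  have Lpi: "lang \<pi> = {w. memL w [4, 8, 9]}" unfolding pidef by (rule lang_nc) simp_all
  have m1: "memL bv1 [4, 8, 9]" unfolding memL3 bv1_def by blast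
  have m2: "\<not> memL (bv2 (fact 9)) [4, 8, 9]"
  proof
    assume "memL (bv2 (fact 9)) [4, 8, 9]"
    then obtain u1 u2 u3 where "bv2 (fact 9) = wpow u1 4 @ wpow u2 8 @ wpow u3 9" unfolding memL3 by blast
    moreover have "3 \<le> (fact 9 :: nat)"
    proof -
      have "(3::nat) \<le> fact 3" by (simp add: numeral_3_eq_3)
      also have "(fact 3 :: nat) \<le> fact 9" by (rule fact_mono) simp
      finally show ?thesis .
    qed
    ultimately show False using v2_not[of "fact 9" u1 4 u2 8 u3 9] by fastforce
  qed
  have m3: "\<not> memL bv3 [4, 8, 9]" unfolding memL3 using v3_not by blast
  have m4: "\<not> memL bv4 [4, 8, 9]" unfolding memL3 using v4_not by blast
  have tr: "\<And>ns. memL v1 ns = memL bv1 ns" "\<And>ns. memL v2 ns = memL (bv2 (fact 9)) ns"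
    "\<And>ns. memL v3 ns = memL bv3 ns" "\<And>ns. memL v4 ns = memL bv4 ns"
    using memL_map[OF inj] e1 e2 e3 e4 by simp_all
  have i1: "v1 \<in> lang \<pi>" unfolding Lpi using m1 tr(1) by blast
  have i2: "v2 \<notin> lang \<pi>" unfolding Lpi using m2 tr(2) by blast
  have i3: "v3 \<notin> lang \<pi>" unfolding Lpi using m3 tr(3) by blast
  have i4: "v4 \<notin> lang \<pi>" unfolding Lpi using m4 tr(4) by blast
  have cons: "consistent \<pi> T"
    unfolding consistent_def T_def using i1 i2 i3 i4 by blast
  have teach: "teaching_set \<pi> (NC_class 9) T"
    unfolding teaching_set_def
  proof (intro conjI ballI impI)
    show "finite T" unfolding T_def by simp
    show "consistent \<pi> T" by (rule cons)
    fix \<tau> :: "'a pattern" assume \<tau>C: "\<tau> \<in> NC_class 9" and ct: "consistent \<tau> T"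
    from \<tau>C obtain xs ns where nc: "xs \<noteq> []" "length xs = length ns" "distinct xs" "\<forall>n\<in>set ns. n \<ge> 1"
      "\<tau> = concat (map (\<lambda>(x, n). replicate n (Var x)) (zip xs ns))"
      and cnt: "\<forall>x. count_list \<tau> (Var x) \<le> 9"
      unfolding NC_class_def non_cross_def by blast
    have L: "lang \<tau> = {w. memL w ns}" using lang_nc[OF nc(3) nc(2)] nc(5) by simp
    have rng: "\<forall>n\<in>set ns. 1 \<le> n \<and> n \<le> 9"
    proof
      fix n assume n: "n \<in> set ns"
      then obtain x where "(x, n) \<in> set (zip xs ns)" using in_zip_ex[OF n nc(2)] by blast
      then have "n \<le> count_list \<tau> (Var x)" unfolding nc(5) by (rule count_nc)
      moreover have "count_list \<tau> (Var x) \<le> 9" using cnt by blast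
      moreover have "1 \<le> n" using nc(4) n by blast
      ultimately show "1 \<le> n \<and> n \<le> 9" by linarith
    qed
    have ne: "ns \<noteq> []" using nc(1) nc(2) by auto
    have c: "v1 \<in> lang \<tau>" "v2 \<notin> lang \<tau>" "v3 \<notin> lang \<tau>" "v4 \<notin> lang \<tau>"
      using ct unfolding consistent_def T_def by blast+
    have c': "memL bv1 ns" "\<not> memL (bv2 (fact 9)) ns" "\<not> memL bv3 ns" "\<not> memL bv4 ns"
      using c unfolding L using tr by blast+
    have "ns = [4, 8, 9]" by (rule key[OF ne rng c'])
    then show "lang \<tau> = lang \<pi>" using L Lpi by simp
  qed
  have TDle: "TD \<pi> (NC_class 9) \<le> enat (card T)"
    unfolding TD_def using teach by (intro INF_lower) simp
  have Tset: "T = set [(v1, True), (v2, False), (v3, False), (v4, False)]" unfolding T_def by simp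
  have cT: "card T \<le> 4" unfolding Tset using card_length[of "[(v1, True), (v2, False), (v3, False), (v4, False)]"] by simp
  have "enat (card T) \<le> 4" using cT by (simp add: numeral_eq_enat)
  then have "TD \<pi> (NC_class 9) \<le> 4" using TDle by (rule order_trans[rotated])
  then show ?thesis using teach unfolding T_def by blast
qed


end
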